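(* A simple binary matroid is chordal if and only if it does not have $U_{3,4}$ as an induced minor.
   Context: A matroid $M$ is chordal if, for each circuit $C$ of $M$ with at least four elements, there are circuits $C_1$ and $C_2$ and an element $e$ such that $C_1\cap C_2=\{e\}$ and $C=(C_1\cup C_2)-e$. An induced minor of $M$ is a matroid obtained from $M$ by a sequence of restrictions to flats and contractions, each contraction followed by simplification. *)

theory Defs
  imports Main "HOL-Library.Z2"
begin

definition matroid :: "'a set \<Rightarrow> ('a set \<Rightarrow> bool) \<Rightarrow> bool" where
  "matroid E I \<longleftrightarrow> finite E \<and> I {} \<and> (\<forall>X. I X \<longrightarrow> X \<subseteq> E)
     \<and> (\<forall>X Y. I Y \<and> X \<subseteq> Y \<longrightarrow> I X)
     \<and> (\<forall>X Y. I X \<and> I Y \<and> card X < card Y \<longrightarrow> (\<exists>y\<in>Y - X. I (insert y X)))"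

definition rank :: "('a set \<Rightarrow> bool) \<Rightarrow> 'a set \<Rightarrow> nat" where
  "rank I X = Max (card ` {Y. Y \<subseteq> X \<and> I Y})"

definition circuit :: "'a set \<Rightarrow> ('a set \<Rightarrow> bool) \<Rightarrow> 'a set \<Rightarrow> bool" where
  "circuit E I C \<longleftrightarrow> C \<subseteq> E \<and> \<not> I C \<and> (\<forall>x\<in>C. I (C - {x}))"

definition loop :: "'a set \<Rightarrow> ('a set \<Rightarrow> bool) \<Rightarrow> 'a \<Rightarrow> bool" where
  "loop E I e \<longleftrightarrow> circuit E I {e}"

definition simple_matroid :: "'a set \<Rightarrow> ('a set \<Rightarrow> bool) \<Rightarrow> bool" where
  "simple_matroid E I \<longleftrightarrow> (\<forall>C. circuit E I C \<longrightarrow> card C \<ge> 3)"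

text \<open>Binary: representable over GF(2); element e is represented by the vector r e
  (coordinates indexed by nat).  X is independent iff the vectors are linearly
  independent, i.e. no nonempty subfamily sums to zero.\<close>
definition binary_matroid :: "'a set \<Rightarrow> ('a set \<Rightarrow> bool) \<Rightarrow> bool" where
  "binary_matroid E I \<longleftrightarrow> (\<exists>r :: 'a \<Rightarrow> nat \<Rightarrow> bit. \<forall>X. X \<subseteq> E \<longrightarrow>
      (I X \<longleftrightarrow> (\<forall>Y. Y \<subseteq> X \<and> Y \<noteq> {} \<longrightarrow> (\<exists>i. (\<Sum>e\<in>Y. r e i) \<noteq> 0))))"

definition chordal :: "'a set \<Rightarrow> ('a set \<Rightarrow> bool) \<Rightarrow> bool" where
  "chordal E I \<longleftrightarrow> (\<forall>C. circuit E I C \<and> card C \<ge> 4 \<longrightarrow>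
      (\<exists>C1 C2 e. circuit E I C1 \<and> circuit E I C2 \<and> C1 \<inter> C2 = {e} \<and> C = (C1 \<union> C2) - {e}))"

definition closure :: "'a set \<Rightarrow> ('a set \<Rightarrow> bool) \<Rightarrow> 'a set \<Rightarrow> 'a set" where
  "closure E I X = {x\<in>E. rank I (insert x X) = rank I X}"

definition flat :: "'a set \<Rightarrow> ('a set \<Rightarrow> bool) \<Rightarrow> 'a set \<Rightarrow> bool" where
  "flat E I F \<longleftrightarrow> F \<subseteq> E \<and> closure E I F = F"

definition restr_indep :: "('a set \<Rightarrow> bool) \<Rightarrow> 'a set \<Rightarrow> 'a set \<Rightarrow> bool" where
  "restr_indep I S X \<longleftrightarrow> I X \<and> X \<subseteq> S"

text \<open>Independence predicate of the contraction M/T (ground set E - T).\<close>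
definition contr_indep :: "'a set \<Rightarrow> ('a set \<Rightarrow> bool) \<Rightarrow> 'a set \<Rightarrow> 'a set \<Rightarrow> bool" where
  "contr_indep E I T X \<longleftrightarrow> X \<subseteq> E - T \<and> rank I (X \<union> T) = card X + rank I T"

text \<open>S is the ground set of a simplification of M: it consists of non-loops and
  contains exactly one element of each parallel class of non-loops.\<close>
definition simplification_set :: "'a set \<Rightarrow> ('a set \<Rightarrow> bool) \<Rightarrow> 'a set \<Rightarrow> bool" where
  "simplification_set E I S \<longleftrightarrow> S \<subseteq> E \<and> (\<forall>s\<in>S. \<not> loop E I s) \<and>
     (\<forall>e\<in>E. \<not> loop E I e \<longrightarrow> (\<exists>!s. s \<in> S \<and> rank I {e, s} = 1))"

inductive induced_minor :: "'a set \<Rightarrow> ('a set \<Rightarrow> bool) \<Rightarrow> 'a set \<Rightarrow> ('a set \<Rightarrow> bool) \<Rightarrow> bool"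
  for E I where
  refl: "induced_minor E I E I"
| restrict_flat: "induced_minor E I E' I' \<Longrightarrow> flat E' I' F \<Longrightarrow>
      induced_minor E I F (restr_indep I' F)"
| contract_simplify: "induced_minor E I E' I' \<Longrightarrow> T \<subseteq> E' \<Longrightarrow>
      simplification_set (E' - T) (contr_indep E' I' T) S \<Longrightarrow>
      induced_minor E I S (restr_indep (contr_indep E' I' T) S)"

definition is_U34 :: "'a set \<Rightarrow> ('a set \<Rightarrow> bool) \<Rightarrow> bool" where
  "is_U34 E I \<longleftrightarrow> card E = 4 \<and> (\<forall>X. I X \<longleftrightarrow> X \<subseteq> E \<and> card X \<le> 3)"

end

theory Submission
  imports Defs
begin


locale mat =
  fixes E :: "'a set" and I :: "'a set \<Rightarrow> bool"
  assumes mat: "matroid E I"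
begin

lemma finE: "finite E" using mat unfolding matroid_def by auto
lemma I_empty: "I {}" using mat unfolding matroid_def by auto
lemma I_sub: "I X \<Longrightarrow> X \<subseteq> E" using mat unfolding matroid_def by auto
lemma I_mono: "I Y \<Longrightarrow> X \<subseteq> Y \<Longrightarrow> I X" using mat unfolding matroid_def by blast
lemma I_aug: "I X \<Longrightarrow> I Y \<Longrightarrow> card X < card Y \<Longrightarrow> \<exists>y\<in>Y - X. I (insert y X)"
  using mat unfolding matroid_def by auto
lemma I_fin: "I X \<Longrightarrow> finite X" using I_sub finE finite_subset by blast

abbreviation r where "r \<equiv> rank I"

lemma rank_set_fin: "finite (card ` {Y. Y \<subseteq> X \<and> I Y})"
proof -
  have "card ` {Y. Y \<subseteq> X \<and> I Y} \<subseteq> {..card E}"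
    using card_mono[OF finE] I_sub by auto
  then show ?thesis using finite_subset by blast
qed

lemma rank_ge: "Y \<subseteq> X \<Longrightarrow> I Y \<Longrightarrow> card Y \<le> r X"
  unfolding rank_def by (rule Max_ge[OF rank_set_fin]) auto

lemma rank_ex: "\<exists>Y. Y \<subseteq> X \<and> I Y \<and> card Y = r X"
proof -
  have "r X \<in> card ` {Y. Y \<subseteq> X \<and> I Y}" unfolding rank_def
    by (rule Max_in[OF rank_set_fin]) (use I_empty in auto)
  then show ?thesis by auto
qed

lemma rank_mono: "X \<subseteq> Y \<Longrightarrow> r X \<le> r Y"
proof -
  assume "X \<subseteq> Y"
  obtain Z where "Z \<subseteq> X" "I Z" "card Z = r X" using rank_ex by blast
  then show ?thesis using rank_ge[of Z Y] \<open>X \<subseteq> Y\<close> by auto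
qed

lemma rank_le_card: "finite X \<Longrightarrow> r X \<le> card X"
proof -
  assume "finite X"
  obtain Z where "Z \<subseteq> X" "I Z" "card Z = r X" using rank_ex by blast
  then show ?thesis using card_mono[OF \<open>finite X\<close>, of Z] by auto
qed

lemma rank_empty: "r {} = 0"
  using rank_le_card[of "{}"] by simp

lemma rank_indep: "I X \<Longrightarrow> r X = card X"
  using rank_ge[of X X] rank_le_card[OF I_fin] by (meson le_antisym order_refl)

lemma indep_rank: "X \<subseteq> E \<Longrightarrow> r X = card X \<Longrightarrow> I X"
proof -
  assume a: "X \<subseteq> E" "r X = card X"
  then have fx: "finite X" using finE finite_subset by blast
  obtain Y where "Y \<subseteq> X" "I Y" "card Y = r X" using rank_ex by blast
  then have "Y = X" using card_subset_eq[OF fx] a by auto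
  then show "I X" using \<open>I Y\<close> by simp
qed

lemma rank_insert: "r (insert x X) \<le> Suc (r X)"
proof -
  obtain Y where Y: "Y \<subseteq> insert x X" "I Y" "card Y = r (insert x X)" using rank_ex by blast
  have "Y - {x} \<subseteq> X" "I (Y - {x})" using Y I_mono by auto
  then have "card (Y - {x}) \<le> r X" using rank_ge by blast
  moreover have "card Y \<le> Suc (card (Y - {x}))"
  proof -
    have "card Y \<le> card (insert x (Y - {x}))" using I_fin[OF Y(2)] by (intro card_mono) auto
    also have "\<dots> \<le> Suc (card (Y - {x}))" using I_fin[OF Y(2)] by (simp only: card_insert_if finite_Diff) auto
    finally show ?thesis .
  qed
  ultimately show ?thesis using Y by simp
qed

lemma rank_le_E: "r X \<le> card E"
proof -
  obtain Z where "Z \<subseteq> X" "I Z" "card Z = r X" using rank_ex by blast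
  then show ?thesis using card_mono[OF finE I_sub[OF \<open>I Z\<close>]] by auto
qed

lemma basis_ext0:
  assumes "I Y" "Y \<subseteq> X"
  shows "\<exists>B. Y \<subseteq> B \<and> B \<subseteq> X \<and> I B \<and> card B = r X"
proof -
  let ?P = "\<lambda>Z. Y \<subseteq> Z \<and> Z \<subseteq> X \<and> I Z"
  obtain Z where Z: "?P Z" and mx: "\<And>Z'. ?P Z' \<Longrightarrow> card E - card Z \<le> card E - card Z'"
    using ex_has_least_nat[of ?P Y "\<lambda>Z. card E - card Z"] assms by blast
  have "card Z \<ge> r X"
  proof (rule ccontr)
    assume "\<not> ?thesis"
    obtain W where W: "W \<subseteq> X" "I W" "card W = r X" using rank_ex by blast
    then obtain w where w: "w \<in> W - Z" "I (insert w Z)"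
      using I_aug[of Z W] Z \<open>\<not> _\<close> by auto
    have "?P (insert w Z)" using w W Z by auto
    then have "card E - card Z \<le> card E - card (insert w Z)" using mx by blast
    moreover have "finite Z" using I_fin Z by blast
    then have "card (insert w Z) = Suc (card Z)" using w by simp
    moreover have "card (insert w Z) \<le> card E" using card_mono[OF finE I_sub[OF w(2)]] .
    ultimately show False by linarith
  qed
  moreover have "card Z \<le> r X" using rank_ge Z by blast
  ultimately have "card Z = r X" by simp
  then show ?thesis using Z by blast
qed

lemma basis_ext:
  assumes "I Y" "Y \<subseteq> X"
  obtains B where "Y \<subseteq> B" "B \<subseteq> X" "I B" "card B = r X"
proof -
  from basis_ext0[OF assms] obtain B where "Y \<subseteq> B \<and> B \<subseteq> X \<and> I B \<and> card B = r X"
    by (elim exE)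
  then show thesis using that by (elim conjE)
qed

lemma submod: "r (A \<union> B) + r (A \<inter> B) \<le> r A + r B"
proof -
  obtain B0 where B0: "B0 \<subseteq> A \<inter> B" "I B0" "card B0 = r (A \<inter> B)" using rank_ex[of "A \<inter> B"] by blast
  obtain B1 where B1: "B0 \<subseteq> B1" "B1 \<subseteq> A" "I B1" "card B1 = r A"
    by (rule basis_ext[OF B0(2), of A]) (use B0(1) in blast)
  obtain B2 where B2: "B1 \<subseteq> B2" "B2 \<subseteq> A \<union> B" "I B2" "card B2 = r (A \<union> B)"
    by (rule basis_ext[OF B1(3), of "A \<union> B"]) (use B1(2) in blast)
  have f2: "finite B2" using I_fin B2 by blast
  have "card (B2 \<inter> A) \<le> r A" using rank_ge[of "B2 \<inter> A" A] I_mono[OF B2(3)] by auto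
  moreover have "B1 \<subseteq> B2 \<inter> A" using B1 B2 by blast
  moreover have "finite (B2 \<inter> A)" using f2 by blast
  ultimately have eq: "B1 = B2 \<inter> A"
    using card_seteq[of "B2 \<inter> A" B1] B1(4) by simp
  have "B0 \<union> (B2 - A) \<subseteq> B2" using B0 B1 B2 by blast
  then have "I (B0 \<union> (B2 - A))" using I_mono[OF B2(3)] by blast
  moreover have "B0 \<union> (B2 - A) \<subseteq> B" using B0 B2 by auto
  ultimately have "card (B0 \<union> (B2 - A)) \<le> r B" using rank_ge by blast
  moreover have "card (B0 \<union> (B2 - A)) = card B0 + card (B2 - A)"
    using B0 f2 I_fin[OF B0(2)] by (intro card_Un_disjoint) auto
  moreover have "card B2 = card (B2 \<inter> A) + card (B2 - A)"
    using f2 by (rule card_Int_Diff)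
  moreover have "card (B2 \<inter> A) = card B1" using eq by simp
  ultimately show ?thesis using B0(3) B1(4) B2(4) by linarith
qed

end


context mat begin

abbreviation cl where "cl \<equiv> closure E I"

lemma cl_iff: "x \<in> cl X \<longleftrightarrow> x \<in> E \<and> r (insert x X) = r X"
  unfolding closure_def by simp

lemma rank_insert_cases: "r (insert x X) = r X \<or> r (insert x X) = Suc (r X)"
  using rank_insert[of x X] rank_mono[of X "insert x X", OF subset_insertI] by linarith

lemma notin_cl: "x \<in> E \<Longrightarrow> x \<notin> cl X \<Longrightarrow> r (insert x X) = Suc (r X)"
  using rank_insert_cases[of x X] by (auto simp: cl_iff)

lemma cl_sub: "cl X \<subseteq> E" by (auto simp: cl_iff)

lemma sub_cl: "X \<subseteq> E \<Longrightarrow> X \<subseteq> cl X"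
  by (auto simp: cl_iff insert_absorb)

lemma cl_mono: "X \<subseteq> Y \<Longrightarrow> cl X \<subseteq> cl Y"
proof
  fix x assume XY: "X \<subseteq> Y" and "x \<in> cl X"
  then have x: "x \<in> E" "r (insert x X) = r X" by (simp_all add: cl_iff)
  have e: "insert x X \<union> Y = insert x Y" using XY by auto
  have "r (insert x Y) + r (insert x X \<inter> Y) \<le> r (insert x X) + r Y"
    using submod[of "insert x X" Y] unfolding e .
  moreover have "r X \<le> r (insert x X \<inter> Y)" by (rule rank_mono) (use XY in auto)
  moreover have "r Y \<le> r (insert x Y)" by (rule rank_mono) auto
  ultimately show "x \<in> cl Y" using x by (simp add: cl_iff)
qed

lemma rank_Un_cl_fin: "finite Y \<Longrightarrow> Y \<subseteq> cl X \<Longrightarrow> r (X \<union> Y) = r X"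
proof (induction Y rule: finite_induct)
  case empty
  then show ?case by simp
next
  case (insert y Y)
  then have IH: "r (X \<union> Y) = r X" and y: "r (insert y X) = r X" by (auto simp: cl_iff)
  have e: "(X \<union> Y) \<union> insert y X = X \<union> insert y Y" by auto
  have "r (X \<union> insert y Y) + r ((X \<union> Y) \<inter> insert y X) \<le> r (X \<union> Y) + r (insert y X)"
    using submod[of "X \<union> Y" "insert y X"] unfolding e .
  moreover have "r X \<le> r ((X \<union> Y) \<inter> insert y X)" by (rule rank_mono) auto
  moreover have "r X \<le> r (X \<union> insert y Y)" by (rule rank_mono) auto
  ultimately show ?case using IH y by linarith
qed

lemma rank_Un_cl: "Y \<subseteq> cl X \<Longrightarrow> r (X \<union> Y) = r X"
proof -
  assume a: "Y \<subseteq> cl X"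
  then have "finite Y" using finite_subset[OF _ finE] cl_sub by blast
  then show ?thesis using a by (rule rank_Un_cl_fin)
qed

lemma cl_cl_sub: assumes "X \<subseteq> cl Y" shows "cl X \<subseteq> cl Y"
proof
  fix x assume x: "x \<in> cl X"
  then have "x \<in> cl (Y \<union> X)" using cl_mono[of X "Y \<union> X"] by blast
  then have a: "r (insert x (Y \<union> X)) = r (Y \<union> X)" and xE: "x \<in> E" by (simp_all add: cl_iff)
  have b: "r (Y \<union> X) = r Y" using rank_Un_cl[OF assms] .
  have c: "r (insert x Y) \<le> r (insert x (Y \<union> X))" by (rule rank_mono) auto
  have d: "r Y \<le> r (insert x Y)" by (rule rank_mono) auto
  show "x \<in> cl Y" using a b c d xE by (simp add: cl_iff)
qed

lemma exchange:
  assumes "x \<in> cl (insert y T)" "x \<notin> cl T" "y \<in> E"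
  shows "y \<in> cl (insert x T)"
proof -
  have xE: "x \<in> E" using assms(1) unfolding cl_iff by (rule conjunct1)
  have a: "r (insert x T) = Suc (r T)" using notin_cl[OF xE assms(2)] .
  have b: "r (insert x (insert y T)) = r (insert y T)" using assms(1) by (simp add: cl_iff)
  have c: "r (insert y T) \<le> Suc (r T)" by (rule rank_insert)
  have d: "r (insert x T) \<le> r (insert y (insert x T))" by (rule rank_mono) auto
  have e: "insert y (insert x T) = insert x (insert y T)" by auto
  have "r (insert y (insert x T)) = r (insert x T)" using a b c d unfolding e by linarith
  then show ?thesis using assms(3) unfolding cl_iff by (intro conjI)
qed

lemma rank_Un_le: "finite X \<Longrightarrow> r (X \<union> T) \<le> card X + r T"
proof (induction X rule: finite_induct)
  case empty
  then show ?case by simp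
next
  case (insert x X)
  have "r (insert x X \<union> T) = r (insert x (X \<union> T))" by simp
  also have "\<dots> \<le> Suc (r (X \<union> T))" by (rule rank_insert)
  finally show ?case using insert by simp
qed

lemma rank_cl_Un: assumes "T \<subseteq> E" shows "r (X \<union> cl T) = r (X \<union> T)"
proof -
  have "cl T \<subseteq> cl (X \<union> T)" by (rule cl_mono) auto
  then have "r ((X \<union> T) \<union> cl T) = r (X \<union> T)" by (rule rank_Un_cl)
  moreover have "(X \<union> T) \<union> cl T = X \<union> cl T" using sub_cl[OF assms] by auto
  ultimately show ?thesis by simp
qed

lemma rank_cl: "T \<subseteq> E \<Longrightarrow> r (cl T) = r T"
  using rank_cl_Un[of T "{}"] by simp

lemma circuitD:
  assumes "circuit E I C"
  shows "C \<subseteq> E" "finite C" "\<not> I C" "C \<noteq> {}" "\<And>x. x \<in> C \<Longrightarrow> I (C - {x})"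
  using assms finite_subset[OF _ finE] I_empty unfolding circuit_def by auto

lemma circuit_proper: "circuit E I C \<Longrightarrow> X \<subseteq> C \<Longrightarrow> X \<noteq> C \<Longrightarrow> I X"
proof -
  assume a: "circuit E I C" "X \<subseteq> C" "X \<noteq> C"
  then obtain x where "x \<in> C" "x \<notin> X" by blast
  then have "X \<subseteq> C - {x}" using a by blast
  then show "I X" using I_mono circuitD(5)[OF a(1) \<open>x \<in> C\<close>] by blast
qed

lemma circuit_rank:
  assumes "circuit E I C" shows "r C = card C - 1" "card C \<ge> 1"
proof -
  obtain x where x: "x \<in> C" using circuitD(4)[OF assms] by blast
  have fC: "finite C" using circuitD(2)[OF assms] .
  have "r (C - {x}) = card (C - {x})" using rank_indep circuitD(5)[OF assms x] by blast
  moreover have "card (C - {x}) = card C - 1" using x fC by simp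
  moreover have "r (C - {x}) \<le> r C" by (rule rank_mono) auto
  moreover have "r C \<le> card C" by (rule rank_le_card[OF fC])
  moreover have "r C \<noteq> card C" using indep_rank circuitD(1,3)[OF assms] by blast
  ultimately show "r C = card C - 1" by linarith
  have "card C > 0" using x fC card_gt_0_iff by blast
  then show "card C \<ge> 1" by simp
qed

lemma circuit_cl: assumes "circuit E I C" "e \<in> C" shows "e \<in> cl (C - {e})"
proof -
  have fC: "finite C" using circuitD(2)[OF assms(1)] .
  have "r (C - {e}) = card (C - {e})" using rank_indep circuitD(5)[OF assms] by blast
  moreover have "card (C - {e}) = card C - 1" using assms(2) fC by simp
  moreover have "insert e (C - {e}) = C" using assms(2) by auto
  moreover have "e \<in> E" using circuitD(1)[OF assms(1)] assms(2) by blast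
  ultimately show ?thesis using circuit_rank(1)[OF assms(1)] by (simp add: cl_iff)
qed

lemma dep_circuit:
  assumes "X \<subseteq> E" "\<not> I X"
  obtains C where "C \<subseteq> X" "circuit E I C"
proof -
  let ?P = "\<lambda>D. D \<subseteq> X \<and> \<not> I D"
  obtain D where D: "?P D" and mn: "\<And>D'. ?P D' \<Longrightarrow> card D \<le> card D'"
    using ex_has_least_nat[of ?P X card] assms by blast
  have fD: "finite D" using D assms(1) finite_subset[OF _ finE] by blast
  have "circuit E I D" unfolding circuit_def
  proof (intro conjI ballI)
    show "D \<subseteq> E" using D assms(1) by blast
    show "\<not> I D" using D by blast
    fix x assume x: "x \<in> D"
    show "I (D - {x})"
    proof (rule ccontr)
      assume "\<not> I (D - {x})"
      then have "card D \<le> card (D - {x})" using mn D by blast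
      moreover have "card (D - {x}) < card D" using card_Diff1_less[OF fD x] .
      ultimately show False by linarith
    qed
  qed
  then show thesis using that D by blast
qed

lemma circ_contr:
  assumes T: "T \<subseteq> E" and C: "circuit E I C" and ne: "C - cl T \<noteq> {}"
  shows "r ((C - cl T) \<union> T) < card (C - cl T) + r T"
proof -
  have fC: "finite C" using circuitD(2)[OF C] .
  have s: "r (C \<union> cl T) + r (C \<inter> cl T) \<le> r C + r (cl T)" by (rule submod)
  have "C \<union> cl T = (C - cl T) \<union> cl T" by auto
  then have "r (C \<union> cl T) = r ((C - cl T) \<union> cl T)" by simp
  also have "\<dots> = r ((C - cl T) \<union> T)" by (rule rank_cl_Un[OF T])
  finally have a: "r (C \<union> cl T) = r ((C - cl T) \<union> T)" .
  have b: "r (cl T) = r T" using rank_cl[OF T] .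
  have "I (C \<inter> cl T)" using circuit_proper[OF C, of "C \<inter> cl T"] ne by blast
  then have c: "r (C \<inter> cl T) = card (C \<inter> cl T)" by (rule rank_indep)
  have d: "card C = card (C \<inter> cl T) + card (C - cl T)" using fC by (rule card_Int_Diff)
  show ?thesis using s a b c d circuit_rank[OF C] by linarith
qed

end


context mat begin

definition Jc :: "'a set \<Rightarrow> 'a set \<Rightarrow> 'a set \<Rightarrow> bool" where
  "Jc A T X \<longleftrightarrow> X \<subseteq> A \<and> r (X \<union> T) = card X + r T"

lemma rank_Jc:
  assumes A: "A \<subseteq> E" and T: "T \<subseteq> E" and AT: "A \<inter> T = {}"
  shows "rank (Jc A T) X = r ((X \<inter> A) \<union> T) - r T"
proof -
  let ?S = "card ` {Y. Y \<subseteq> X \<and> Jc A T Y}"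
  have "{Y. Y \<subseteq> X \<and> Jc A T Y} \<subseteq> Pow A" by (auto simp: Jc_def)
  moreover have "finite (Pow A)" using finite_subset[OF A finE] by simp
  ultimately have fin: "finite ?S" using finite_subset by blast
  have up: "y \<le> r ((X \<inter> A) \<union> T) - r T" if "y \<in> ?S" for y
  proof -
    obtain Y where Y: "Y \<subseteq> X" "Jc A T Y" "y = card Y" using \<open>y \<in> ?S\<close> by blast
    then have "Y \<subseteq> A" "r (Y \<union> T) = card Y + r T" by (simp_all add: Jc_def)
    moreover have "r (Y \<union> T) \<le> r ((X \<inter> A) \<union> T)" by (rule rank_mono) (use Y \<open>Y \<subseteq> A\<close> in blast)
    ultimately show ?thesis using Y(3) by linarith
  qed
  obtain BT where BT: "BT \<subseteq> T" "I BT" "card BT = r T" using rank_ex[of T] by blast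
  obtain B where B: "BT \<subseteq> B" "B \<subseteq> (X \<inter> A) \<union> T" "I B" "card B = r ((X \<inter> A) \<union> T)"
    by (rule basis_ext[OF BT(2), of "(X \<inter> A) \<union> T"]) (use BT(1) in blast)
  have fB: "finite B" using I_fin[OF B(3)] .
  have "card (B \<inter> T) \<le> r T" using rank_ge[of "B \<inter> T" T] I_mono[OF B(3), of "B \<inter> T"] by blast
  moreover have "BT \<subseteq> B \<inter> T" using B BT by blast
  moreover have "finite (B \<inter> T)" using fB by blast
  ultimately have BTeq: "BT = B \<inter> T" using card_seteq[of "B \<inter> T" BT] BT(3) by simp
  let ?Y = "B - T"
  have cB: "card B = card (B \<inter> T) + card (B - T)" using fB by (rule card_Int_Diff)
  have cY: "card ?Y = r ((X \<inter> A) \<union> T) - r T" using cB B(4) BT(3) BTeq by simp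
  have YX: "?Y \<subseteq> X" "?Y \<subseteq> A" using B(2) by blast+
  have fY: "finite ?Y" using fB by blast
  have "r (?Y \<union> T) \<le> card ?Y + r T" using rank_Un_le[OF fY] .
  moreover have "r B \<le> r (?Y \<union> T)" by (rule rank_mono) blast
  moreover have "r B = card B" using rank_indep[OF B(3)] .
  moreover have "card (B \<inter> T) = r T" using BTeq BT(3) by simp
  ultimately have "r (?Y \<union> T) = card ?Y + r T" using cB by linarith
  then have "Jc A T ?Y" using YX by (simp add: Jc_def)
  then have inS: "r ((X \<inter> A) \<union> T) - r T \<in> ?S" using YX cY by (metis (mono_tags, lifting) image_eqI mem_Collect_eq)
  have "rank (Jc A T) X = Max ?S" by (simp only: rank_def)
  also have "\<dots> = r ((X \<inter> A) \<union> T) - r T" by (rule Max_eqI[OF fin up inS])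
  finally show ?thesis .
qed

definition QF :: "'a set \<Rightarrow> 'a set \<Rightarrow> bool" where
  "QF A T \<longleftrightarrow> (\<forall>x. x \<in> cl (A \<union> T) \<longrightarrow> x \<in> cl T \<or> (\<exists>y\<in>A. x \<in> cl (insert y T)))"

definition Inv :: "'a set \<Rightarrow> ('a set \<Rightarrow> bool) \<Rightarrow> bool" where
  "Inv A J \<longleftrightarrow> (\<exists>T. T \<subseteq> E \<and> A \<subseteq> E \<and> A \<inter> T = {} \<and> J = Jc A T \<and> QF A T)"

lemma Inv_refl: "Inv E I"
proof -
  have "I = Jc E {}"
  proof
    fix X show "I X = Jc E {} X"
      using rank_indep[of X] indep_rank[of X] I_sub[of X] by (auto simp: Jc_def rank_empty)
  qed
  moreover have "QF E {}" unfolding QF_def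
  proof (intro allI impI)
    fix x assume "x \<in> cl (E \<union> {})"
    then have "x \<in> E" using cl_sub by blast
    then have "x \<in> cl (insert x {})" using sub_cl[of "{x}"] by blast
    then show "x \<in> cl {} \<or> (\<exists>y\<in>E. x \<in> cl (insert y {}))" using \<open>x \<in> E\<close> by blast
  qed
  ultimately show ?thesis unfolding Inv_def by blast
qed

lemma closure_Jc:
  assumes A: "A \<subseteq> E" and T: "T \<subseteq> E" and AT: "A \<inter> T = {}" and F: "F \<subseteq> A" and x: "x \<in> A"
  shows "x \<in> closure A (Jc A T) F \<longleftrightarrow> x \<in> cl (F \<union> T)"
proof -
  have "insert x F \<inter> A = insert x F" "F \<inter> A = F" using F x by auto
  then have e1: "rank (Jc A T) (insert x F) = r (insert x (F \<union> T)) - r T"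
     and e2: "rank (Jc A T) F = r (F \<union> T) - r T"
    using rank_Jc[OF A T AT] by simp_all
  have m1: "r T \<le> r (F \<union> T)" by (rule rank_mono) blast
  have m2: "r (F \<union> T) \<le> r (insert x (F \<union> T))" by (rule rank_mono) blast
  have "x \<in> E" using x A by blast
  then show ?thesis unfolding closure_def cl_iff using e1 e2 m1 m2 x by auto
qed

lemma Inv_flat:
  assumes "Inv A J" "flat A J F"
  shows "Inv F (restr_indep J F)"
proof -
  obtain T where T: "T \<subseteq> E" "A \<subseteq> E" "A \<inter> T = {}" "J = Jc A T" "QF A T"
    using assms(1) unfolding Inv_def by blast
  have FA: "F \<subseteq> A" and clF: "closure A J F = F" using assms(2) unfolding flat_def by auto
  have rs: "restr_indep J F = Jc F T"
  proof
    fix X show "restr_indep J F X = Jc F T X" using FA T(4) by (auto simp: restr_indep_def Jc_def)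
  qed
  have "QF F T" unfolding QF_def
  proof (intro allI impI)
    fix x assume x: "x \<in> cl (F \<union> T)"
    have "cl (F \<union> T) \<subseteq> cl (A \<union> T)" by (rule cl_mono) (use FA in blast)
    then have "x \<in> cl (A \<union> T)" using x by blast
    then have "x \<in> cl T \<or> (\<exists>y\<in>A. x \<in> cl (insert y T))" using T(5) unfolding QF_def by blast
    then show "x \<in> cl T \<or> (\<exists>y\<in>F. x \<in> cl (insert y T))"
    proof
      assume "x \<in> cl T" then show ?thesis by blast
    next
      assume "\<exists>y\<in>A. x \<in> cl (insert y T)"
      then obtain y where y: "y \<in> A" "x \<in> cl (insert y T)" by blast
      show ?thesis
      proof (cases "x \<in> cl T")
        case True then show ?thesis by blast
      next
        case False
        then have "y \<in> cl (insert x T)" using exchange[OF y(2) False] y(1) T(2) by blast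
        moreover have "insert x T \<subseteq> cl (F \<union> T)"
        proof -
          have "T \<subseteq> cl T" using sub_cl[OF T(1)] .
          moreover have "cl T \<subseteq> cl (F \<union> T)" by (rule cl_mono) blast
          ultimately show ?thesis using x by blast
        qed
        ultimately have "y \<in> cl (F \<union> T)" using cl_cl_sub by blast
        then have "y \<in> closure A J F" using closure_Jc[OF T(2,1,3) FA y(1)] T(4) by simp
        then have "y \<in> F" using clF by simp
        then show ?thesis using y(2) by blast
      qed
    qed
  qed
  then show ?thesis unfolding Inv_def using T FA rs by blast
qed

lemma Jc_empty: "Jc A T {}"
  by (simp add: Jc_def)

lemma loop_Jc:
  assumes "y \<in> A" "A \<subseteq> E"
  shows "loop A (Jc A T) y \<longleftrightarrow> y \<in> cl T"
proof -
  have "loop A (Jc A T) y \<longleftrightarrow> \<not> Jc A T {y}"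
    unfolding loop_def circuit_def using assms(1) Jc_empty by auto
  also have "\<dots> \<longleftrightarrow> r (insert y T) \<noteq> Suc (r T)" using assms(1) by (simp add: Jc_def)
  also have "\<dots> \<longleftrightarrow> y \<in> cl T" using notin_cl[of y T] assms by (auto simp: cl_iff)
  finally show ?thesis .
qed

lemma contr_Jc:
  assumes A: "A \<subseteq> E" and T: "T \<subseteq> E" and AT: "A \<inter> T = {}" and T': "T' \<subseteq> A"
  shows "contr_indep A (Jc A T) T' = Jc (A - T') (T \<union> T')"
proof
  fix X
  show "contr_indep A (Jc A T) T' X = Jc (A - T') (T \<union> T') X"
  proof (cases "X \<subseteq> A - T'")
    case False then show ?thesis by (simp add: contr_indep_def Jc_def)
  next
    case True
    have "(X \<union> T') \<inter> A = X \<union> T'" "T' \<inter> A = T'" using True T' by auto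
    then have e1: "rank (Jc A T) (X \<union> T') = r (X \<union> (T \<union> T')) - r T"
      and e2: "rank (Jc A T) T' = r (T \<union> T') - r T"
      using rank_Jc[OF A T AT] by (simp_all add: Un_ac)
    have m1: "r T \<le> r (T \<union> T')" by (rule rank_mono) blast
    have m2: "r (T \<union> T') \<le> r (X \<union> (T \<union> T'))" by (rule rank_mono) blast
    show ?thesis using True e1 e2 m1 m2 by (auto simp: contr_indep_def Jc_def)
  qed
qed

lemma restr_Jc: "S \<subseteq> A \<Longrightarrow> restr_indep (Jc A T) S = Jc S T"
  by (auto simp: restr_indep_def Jc_def fun_eq_iff)

lemma Inv_contr:
  assumes "Inv A J" "T' \<subseteq> A" "simplification_set (A - T') (contr_indep A J T') S"
  shows "Inv S (restr_indep (contr_indep A J T') S)"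
proof -
  obtain T where T: "T \<subseteq> E" "A \<subseteq> E" "A \<inter> T = {}" "J = Jc A T" "QF A T"
    using assms(1) unfolding Inv_def by blast
  let ?T2 = "T \<union> T'" and ?A2 = "A - T'"
  have cj: "contr_indep A J T' = Jc ?A2 ?T2" using contr_Jc[OF T(2,1,3) assms(2)] T(4) by simp
  have ss: "simplification_set ?A2 (Jc ?A2 ?T2) S" using assms(3) cj by simp
  have SA: "S \<subseteq> ?A2" using ss unfolding simplification_set_def by blast
  have T2E: "?T2 \<subseteq> E" using T assms(2) by blast
  have A2E: "?A2 \<subseteq> E" using T by blast
  have A2T2: "?A2 \<inter> ?T2 = {}" using T by blast
  have rs: "restr_indep (contr_indep A J T') S = Jc S ?T2" using cj restr_Jc[OF SA] by simp
  have Snl: "s \<notin> cl ?T2" if "s \<in> S" for s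
  proof -
    have "\<not> loop ?A2 (Jc ?A2 ?T2) s" using ss that unfolding simplification_set_def by blast
    then show ?thesis using loop_Jc[OF _ A2E, of s ?T2] SA that by blast
  qed
  have par: "\<exists>s\<in>S. y \<in> cl (insert s ?T2)" if y: "y \<in> ?A2" "y \<notin> cl ?T2" for y
  proof -
    have "\<not> loop ?A2 (Jc ?A2 ?T2) y" using loop_Jc[OF y(1) A2E] y(2) by blast
    then obtain s where s: "s \<in> S" "rank (Jc ?A2 ?T2) {y, s} = 1"
      using ss y(1) unfolding simplification_set_def by blast
    have "{y, s} \<inter> ?A2 = {y, s}" using s(1) SA y(1) by blast
    then have "rank (Jc ?A2 ?T2) {y, s} = r ({y, s} \<union> ?T2) - r ?T2"
      using rank_Jc[OF A2E T2E A2T2, of "{y, s}"] by simp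
    moreover have "{y, s} \<union> ?T2 = insert y (insert s ?T2)" by auto
    ultimately have a: "r (insert y (insert s ?T2)) = Suc (r ?T2)" using s(2)
      using rank_mono[of ?T2 "insert y (insert s ?T2)"] by auto
    have sE: "s \<in> E" using s(1) SA A2E by blast
    have b: "r (insert s ?T2) = Suc (r ?T2)" using notin_cl[OF sE Snl[OF s(1)]] .
    have "y \<in> E" using y(1) A2E by blast
    then have "y \<in> cl (insert s ?T2)" using a b by (simp add: cl_iff)
    then show ?thesis using s(1) by blast
  qed
  have "QF S ?T2" unfolding QF_def
  proof (intro allI impI)
    fix x assume x: "x \<in> cl (S \<union> ?T2)"
    have "cl (S \<union> ?T2) \<subseteq> cl (A \<union> T)" by (rule cl_mono) (use SA assms(2) in blast)
    then have "x \<in> cl (A \<union> T)" using x by blast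
    then have "x \<in> cl T \<or> (\<exists>y\<in>A. x \<in> cl (insert y T))" using T(5) unfolding QF_def by blast
    then show "x \<in> cl ?T2 \<or> (\<exists>s\<in>S. x \<in> cl (insert s ?T2))"
    proof
      assume "x \<in> cl T"
      moreover have "cl T \<subseteq> cl ?T2" by (rule cl_mono) blast
      ultimately show ?thesis by blast
    next
      assume "\<exists>y\<in>A. x \<in> cl (insert y T)"
      then obtain y where y: "y \<in> A" "x \<in> cl (insert y T)" by blast
      have "cl (insert y T) \<subseteq> cl (insert y ?T2)" by (rule cl_mono) blast
      then have x2: "x \<in> cl (insert y ?T2)" using y(2) by blast
      show ?thesis
      proof (cases "y \<in> cl ?T2")
        case True
        have "insert y ?T2 \<subseteq> cl ?T2" using True sub_cl[OF T2E] by blast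
        then have "cl (insert y ?T2) \<subseteq> cl ?T2" by (rule cl_cl_sub)
        then show ?thesis using x2 by blast
      next
        case False
        then have "y \<notin> T'" using sub_cl[OF T2E] by blast
        then have "y \<in> ?A2" using y(1) by blast
        then obtain s where s: "s \<in> S" "y \<in> cl (insert s ?T2)" using par False by blast
        have "insert y ?T2 \<subseteq> cl (insert s ?T2)"
        proof -
          have "?T2 \<subseteq> cl ?T2" using sub_cl[OF T2E] .
          moreover have "cl ?T2 \<subseteq> cl (insert s ?T2)" by (rule cl_mono) blast
          ultimately show ?thesis using s(2) by blast
        qed
        then have "cl (insert y ?T2) \<subseteq> cl (insert s ?T2)" by (rule cl_cl_sub)
        then show ?thesis using x2 s(1) by blast
      qed
    qed
  qed
  moreover have "S \<subseteq> E" using SA A2E by blast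
  moreover have "S \<inter> ?T2 = {}" using SA T(3) by blast
  ultimately show ?thesis unfolding Inv_def using T2E rs by blast
qed

lemma Inv_minor: "induced_minor E I A J \<Longrightarrow> Inv A J"
proof (induction rule: induced_minor.induct)
  case refl
  then show ?case by (rule Inv_refl)
next
  case (restrict_flat E' I' F)
  then show ?case using Inv_flat by blast
next
  case (contract_simplify E' I' T S)
  then show ?case using Inv_contr by blast
qed

end


context mat begin

definition good :: "'a set \<Rightarrow> 'a set \<Rightarrow> 'a set \<Rightarrow> bool" where
  "good A T C \<longleftrightarrow> circuit E I C \<and> C \<subseteq> cl (A \<union> T) \<and> card (C - cl T) = 4 \<and>
     (\<forall>X. X \<subseteq> C - cl T \<and> card X \<le> 3 \<longrightarrow> r (X \<union> T) = card X + r T) \<and>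
     (\<forall>y\<in>A. \<exists>f\<in>C - cl T. f \<in> cl (insert y T))"

lemma swap_rank:
  assumes "e \<in> cl (insert f T)" "f \<in> cl (insert e T)" "T \<subseteq> Z"
  shows "r (insert e Z) = r (insert f Z)"
proof -
  have "cl (insert f T) \<subseteq> cl (insert f Z)" by (rule cl_mono) (use assms(3) in blast)
  then have "e \<in> cl (insert f Z)" using assms(1) by blast
  then have a: "r (insert e (insert f Z)) = r (insert f Z)" by (simp add: cl_iff)
  have "cl (insert e T) \<subseteq> cl (insert e Z)" by (rule cl_mono) (use assms(3) in blast)
  then have "f \<in> cl (insert e Z)" using assms(2) by blast
  then have b: "r (insert f (insert e Z)) = r (insert e Z)" by (simp add: cl_iff)
  have "insert f (insert e Z) = insert e (insert f Z)" by blast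
  then show ?thesis using a b by simp
qed

lemma circ_contr_bound:
  assumes T: "T \<subseteq> E" and C: "circuit E I C" and sub: "C - cl T \<subseteq> F" and ne: "C - cl T \<noteq> {}"
    and F4: "card F = 4" and fF: "finite F"
    and ind: "\<forall>X. X \<subseteq> F \<and> card X \<le> 3 \<longrightarrow> r (X \<union> T) = card X + r T"
  shows "C - cl T = F"
proof -
  have lt: "r ((C - cl T) \<union> T) < card (C - cl T) + r T" by (rule circ_contr[OF T C ne])
  have "card (C - cl T) \<le> 4" using card_mono[OF fF sub] F4 by simp
  moreover have "\<not> card (C - cl T) \<le> 3" using ind sub lt by fastforce
  ultimately have "card (C - cl T) = card F" using F4 by simp
  then show ?thesis using card_subset_eq[OF fF sub] by simp
qed

lemma card_split:
  assumes C1: "circuit E I C1" and C2: "circuit E I C2" and int: "C1 \<inter> C2 = {e}"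
    and C: "C = (C1 \<union> C2) - {e}"
  shows "card C = (card C1 - 1) + (card C2 - 1)"
proof -
  have f1: "finite C1" and f2: "finite C2" using circuitD(2) C1 C2 by blast+
  have "C = (C1 - {e}) \<union> (C2 - {e})" using C by blast
  moreover have "(C1 - {e}) \<inter> (C2 - {e}) = {}" using int by blast
  ultimately have "card C = card (C1 - {e}) + card (C2 - {e})" using f1 f2 by (simp add: card_Un_disjoint)
  moreover have "e \<in> C1" "e \<in> C2" using int by blast+
  ultimately show ?thesis using f1 f2 by simp
qed

lemma shrinkK:
  assumes T: "T \<subseteq> E" and g: "good A T C" and C1: "circuit E I C1" and C2: "circuit E I C2"
    and int: "C1 \<inter> C2 = {e}" and C: "C = (C1 \<union> C2) - {e}" and eK: "e \<in> cl T"
    and f: "f \<in> C1" "f \<in> C - cl T" and c2: "card C2 \<ge> 3"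
  shows "good A T C1 \<and> card C1 < card C"
proof -
  let ?F = "C - cl T"
  have gC: "circuit E I C" "C \<subseteq> cl (A \<union> T)" "card ?F = 4"
    "\<forall>X. X \<subseteq> ?F \<and> card X \<le> 3 \<longrightarrow> r (X \<union> T) = card X + r T"
    "\<forall>y\<in>A. \<exists>f\<in>?F. f \<in> cl (insert y T)" using g unfolding good_def by blast+
  have fF: "finite ?F" using circuitD(2)[OF gC(1)] by blast
  have sub: "C1 - cl T \<subseteq> ?F" using C eK by blast
  have ne: "C1 - cl T \<noteq> {}" using f by blast
  have eq: "C1 - cl T = ?F" by (rule circ_contr_bound[OF T C1 sub ne gC(3) fF gC(4)])
  have "cl T \<subseteq> cl (A \<union> T)" by (rule cl_mono) blast
  then have "C1 \<subseteq> cl (A \<union> T)" using gC(2) C eK by blast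
  then have "good A T C1" unfolding good_def using eq gC C1 by simp
  moreover have "card C1 < card C" using card_split[OF C1 C2 int C] c2 circuit_rank(2)[OF C1] by linarith
  ultimately show ?thesis by blast
qed

lemma shrinkN:
  assumes T: "T \<subseteq> E" and g: "good A T C" and C1: "circuit E I C1" and C2: "circuit E I C2"
    and int: "C1 \<inter> C2 = {e}" and C: "C = (C1 \<union> C2) - {e}" and eK: "e \<notin> cl T"
    and eA: "e \<in> cl (A \<union> T)"
    and f: "f \<in> C1" "f \<in> C - cl T" and ef: "e \<in> cl (insert f T)" and c1: "card C1 \<ge> 3"
  shows "good A T C2 \<and> card C2 < card C"
proof -
  let ?F = "C - cl T"
  have gC: "circuit E I C" "C \<subseteq> cl (A \<union> T)" "card ?F = 4"
    "\<forall>X. X \<subseteq> ?F \<and> card X \<le> 3 \<longrightarrow> r (X \<union> T) = card X + r T"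
    "\<forall>y\<in>A. \<exists>f\<in>?F. f \<in> cl (insert y T)" using g unfolding good_def by blast+
  have gC4: "r (X \<union> T) = card X + r T" if "X \<subseteq> ?F" "card X \<le> 3" for X
    using gC(4) that by simp
  have fF: "finite ?F" using circuitD(2)[OF gC(1)] by blast
  have fE: "f \<in> E" using f circuitD(1)[OF C1] by blast
  have eC: "e \<notin> C" using C by blast
  have fK: "f \<notin> cl T" using f by blast
  have fe: "f \<in> cl (insert e T)" by (rule exchange[OF ef eK fE])
  let ?G = "C2 - {e} - cl T"
  have GF: "?G \<subseteq> ?F" using C by blast
  have fG: "f \<notin> ?G" using f int by blast
  have eG: "e \<notin> ?G" by blast
  have finG: "finite ?G" using finite_subset[OF GF fF] .
  have C2K: "C2 - cl T = insert e ?G" using int eK by blast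
  have lt: "r ((insert e ?G) \<union> T) < card (insert e ?G) + r T"
    using circ_contr[OF T C2] C2K by (metis insert_not_empty)
  have "r ((insert e ?G) \<union> T) = r (insert e (?G \<union> T))" by simp
  also have "\<dots> = r (insert f (?G \<union> T))" by (rule swap_rank[OF ef fe]) blast
  also have "\<dots> = r ((insert f ?G) \<union> T)" by simp
  finally have req: "r ((insert e ?G) \<union> T) = r ((insert f ?G) \<union> T)" .
  have ceq: "card (insert e ?G) = card (insert f ?G)" using finG fG eG by simp
  have fGF: "insert f ?G \<subseteq> ?F" using GF f by blast
  have "card (insert f ?G) \<le> 4" using card_mono[OF fF fGF] gC(3) by simp
  moreover have "\<not> card (insert f ?G) \<le> 3"
  proof
    assume "card (insert f ?G) \<le> 3"
    then have "r (insert f ?G \<union> T) = card (insert f ?G) + r T" by (rule gC4[OF fGF])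
    then show False using lt req ceq by linarith
  qed
  ultimately have "card (insert f ?G) = card ?F" using gC(3) by simp
  then have "insert f ?G = ?F" using card_subset_eq[OF fF fGF] by simp
  then have Geq: "?G = ?F - {f}" using fG by blast
  let ?F2 = "insert e (?F - {f})"
  have C2K2: "C2 - cl T = ?F2" using C2K unfolding Geq .
  have eF: "e \<notin> ?F" using eC by blast
  have c3: "card (?F - {f}) = 3" using fF f(2) gC(3) by (simp add: card_Diff_singleton)
  have c4: "card ?F2 = 4" using eF fF c3 by (simp add: card_insert_if)
  have sub3: "r (X \<union> T) = card X + r T" if X: "X \<subseteq> ?F2" "card X \<le> 3" for X
  proof (cases "e \<in> X")
    case False
    then have "X \<subseteq> ?F" using X by blast
    then show ?thesis using X(2) by (rule gC4)
  next
    case True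
    let ?X' = "insert f (X - {e})"
    have "finite ?F2" using fF by simp
    then have fX: "finite X" using finite_subset[OF X(1)] by blast
    have "f \<noteq> e" using f(2) eC by blast
    then have fnX: "f \<notin> X" using X(1) by blast
    have X'F: "?X' \<subseteq> ?F" using X(1) f by blast
    have "card X > 0" using fX True card_gt_0_iff by blast
    then have cX': "card ?X' = card X" using fX fnX True by simp
    have "X \<union> T = insert e ((X - {e}) \<union> T)" using True by blast
    then have "r (X \<union> T) = r (insert e ((X - {e}) \<union> T))" by (rule arg_cong)
    also have "\<dots> = r (insert f ((X - {e}) \<union> T))" by (rule swap_rank[OF ef fe]) blast
    also have "\<dots> = r (?X' \<union> T)" by simp
    also have "\<dots> = card ?X' + r T" using X'F cX' X(2) by (intro gC4) simp_all
    finally show ?thesis using cX' by simp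
  qed
  have parC2: "\<exists>f'\<in>C2 - cl T. f' \<in> cl (insert y T)" if y: "y \<in> A" for y
  proof -
    obtain f' where f': "f' \<in> ?F" "f' \<in> cl (insert y T)" using gC(5) y by blast
    show ?thesis
    proof (cases "f' = f")
      case False
      then show ?thesis using f' C2K2 by blast
    next
      case True
      have "insert f T \<subseteq> cl (insert y T)"
      proof -
        have "T \<subseteq> cl T" using sub_cl[OF T] .
        moreover have "cl T \<subseteq> cl (insert y T)" by (rule cl_mono) blast
        ultimately show ?thesis using f' True by blast
      qed
      then have "cl (insert f T) \<subseteq> cl (insert y T)" by (rule cl_cl_sub)
      then have "e \<in> cl (insert y T)" using ef by blast
      then show ?thesis using C2K2 by blast
    qed
  qed
  have "C2 \<subseteq> cl (A \<union> T)" using gC(2) C eA by blast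
  then have "good A T C2" unfolding good_def using C2 C2K2 c4 sub3 parC2 by simp
  moreover have "card C2 < card C" using card_split[OF C1 C2 int C] c1 circuit_rank(2)[OF C2] by linarith
  ultimately show ?thesis by blast
qed

end


context mat begin

lemma good_exists:
  assumes T: "T \<subseteq> E" and A: "A \<subseteq> E" and AT: "A \<inter> T = {}" and A4: "card A = 4"
    and ind: "\<And>X. X \<subseteq> A \<Longrightarrow> card X \<le> 3 \<Longrightarrow> r (X \<union> T) = card X + r T"
    and dep: "r (A \<union> T) \<noteq> 4 + r T"
  shows "\<exists>C. good A T C"
proof -
  have fA: "finite A" using finite_subset[OF A finE] .
  have AK: "A \<inter> cl T = {}"
  proof (rule ccontr)
    assume "A \<inter> cl T \<noteq> {}"
    then obtain y where y: "y \<in> A" "y \<in> cl T" by blast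
    have "r ({y} \<union> T) = card {y} + r T" by (rule ind) (use y in auto)
    moreover have "r (insert y T) = r T" using y(2) by (simp add: cl_iff)
    ultimately show False by simp
  qed
  obtain BT where BT: "BT \<subseteq> T" "I BT" "card BT = r T" using rank_ex[of T] by blast
  have fBT: "finite BT" using I_fin[OF BT(2)] .
  have r1: "r (A \<union> BT) \<le> r (A \<union> T)" by (rule rank_mono) (use BT in blast)
  have r2: "r (A \<union> T) \<le> card A + r T" by (rule rank_Un_le[OF fA])
  have c: "card (A \<union> BT) = card A + card BT" using fA fBT AT BT(1) by (intro card_Un_disjoint) auto
  have nI: "\<not> I (A \<union> BT)"
  proof
    assume "I (A \<union> BT)"
    then have "r (A \<union> BT) = card (A \<union> BT)" by (rule rank_indep)
    then show False using r1 r2 c dep A4 BT(3) by linarith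
  qed
  have ABE: "A \<union> BT \<subseteq> E" using A BT T by blast
  obtain D where D: "D \<subseteq> A \<union> BT" "circuit E I D" by (rule dep_circuit[OF ABE nI])
  have TK: "T \<subseteq> cl T" using sub_cl[OF T] .
  have sub: "D - cl T \<subseteq> A" using D(1) BT(1) TK by blast
  have ne: "D - cl T \<noteq> {}"
  proof
    assume "D - cl T = {}"
    then have "D \<subseteq> BT" using D(1) AK by blast
    then have "I D" using I_mono[OF BT(2)] by blast
    then show False using circuitD(3)[OF D(2)] by blast
  qed
  have ind': "\<forall>X. X \<subseteq> A \<and> card X \<le> 3 \<longrightarrow> r (X \<union> T) = card X + r T" using ind by blast
  have eq: "D - cl T = A" by (rule circ_contr_bound[OF T D(2) sub ne A4 fA ind'])
  have "A \<union> T \<subseteq> cl (A \<union> T)" by (rule sub_cl) (use A T in blast)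
  then have Dcl: "D \<subseteq> cl (A \<union> T)" using D(1) BT(1) by blast
  have par: "\<forall>y\<in>A. \<exists>f\<in>D - cl T. f \<in> cl (insert y T)"
  proof
    fix y assume y: "y \<in> A"
    have "insert y T \<subseteq> cl (insert y T)" by (rule sub_cl) (use y A T in blast)
    then have "y \<in> cl (insert y T)" by blast
    then show "\<exists>f\<in>D - cl T. f \<in> cl (insert y T)" using y eq by blast
  qed
  have "good A T D" unfolding good_def using D(2) Dcl eq A4 ind' par by simp
  then show ?thesis by blast
qed

lemma dir1_core:
  assumes simple: "simple_matroid E I" and ch: "chordal E I" and inv: "Inv A J" and u: "is_U34 A J"
  shows False
proof -
  obtain T where T: "T \<subseteq> E" "A \<subseteq> E" "A \<inter> T = {}" "J = Jc A T" "QF A T"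
    using inv unfolding Inv_def by blast
  have A4: "card A = 4" and Jiff: "\<And>X. J X \<longleftrightarrow> X \<subseteq> A \<and> card X \<le> 3"
    using u unfolding is_U34_def by blast+
  have ind: "r (X \<union> T) = card X + r T" if "X \<subseteq> A" "card X \<le> 3" for X
  proof -
    have "J X" using Jiff that by blast
    then show ?thesis using T(4) by (simp add: Jc_def)
  qed
  have dep: "r (A \<union> T) \<noteq> 4 + r T"
  proof
    assume "r (A \<union> T) = 4 + r T"
    then have "Jc A T A" using A4 by (simp add: Jc_def)
    then have "J A" using T(4) by simp
    then show False using Jiff A4 by simp
  qed
  obtain C0 where "good A T C0" using good_exists[OF T(1-3) A4 ind dep] by blast
  then obtain C where gC: "good A T C" and mn: "\<And>C'. good A T C' \<Longrightarrow> card C \<le> card C'"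
    using ex_has_least_nat[of "good A T" C0 card] by blast
  let ?F = "C - cl T"
  have circ: "circuit E I C" and Ccl: "C \<subseteq> cl (A \<union> T)" and F4: "card ?F = 4"
    and gpar: "\<forall>y\<in>A. \<exists>f\<in>?F. f \<in> cl (insert y T)"
    using gC unfolding good_def by blast+
  have fC: "finite C" using circuitD(2)[OF circ] .
  have "card ?F \<le> card C" by (rule card_mono[OF fC]) blast
  then have C4: "card C \<ge> 4" using F4 by simp
  obtain C1 C2 e where C1: "circuit E I C1" and C2: "circuit E I C2" and int: "C1 \<inter> C2 = {e}"
    and Ceq: "C = (C1 \<union> C2) - {e}"
    using ch circ C4 unfolding chordal_def by blast
  have c1: "card C1 \<ge> 3" and c2: "card C2 \<ge> 3" using simple C1 C2 unfolding simple_matroid_def by blast+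
  have int': "C2 \<inter> C1 = {e}" using int by blast
  have Ceq': "C = (C2 \<union> C1) - {e}" using Ceq by blast
  have "?F \<noteq> {}" using F4 by (metis card.empty zero_neq_numeral)
  then obtain f0 where f0: "f0 \<in> ?F" by blast
  have f0C: "f0 \<in> C1 \<or> f0 \<in> C2" using f0 Ceq by blast
  show False
  proof (cases "e \<in> cl T")
    case True
    show False
    proof (cases "f0 \<in> C1")
      case True': True
      have "good A T C1 \<and> card C1 < card C"
        by (rule shrinkK[OF T(1) gC C1 C2 int Ceq \<open>e \<in> cl T\<close> True' f0 c2])
      then show False using mn by fastforce
    next
      case False
      then have "f0 \<in> C2" using f0C by blast
      then have "good A T C2 \<and> card C2 < card C"
        by (rule shrinkK[OF T(1) gC C2 C1 int' Ceq' \<open>e \<in> cl T\<close> _ f0 c1])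
      then show False using mn by fastforce
    qed
  next
    case False
    have eC1: "e \<in> C1" using int by blast
    have "e \<in> cl (C1 - {e})" by (rule circuit_cl[OF C1 eC1])
    moreover have "cl (C1 - {e}) \<subseteq> cl C" by (rule cl_mono) (use Ceq in blast)
    moreover have "cl C \<subseteq> cl (A \<union> T)" by (rule cl_cl_sub[OF Ccl])
    ultimately have eA: "e \<in> cl (A \<union> T)" by blast
    then obtain y where y: "y \<in> A" "e \<in> cl (insert y T)"
      using T(5) False unfolding QF_def by blast
    obtain f where f: "f \<in> ?F" "f \<in> cl (insert y T)" using gpar y(1) by blast
    have yE: "y \<in> E" using y(1) T(2) by blast
    have fK: "f \<notin> cl T" using f by blast
    have "y \<in> cl (insert f T)" by (rule exchange[OF f(2) fK yE])
    moreover have "T \<subseteq> cl (insert f T)"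
    proof -
      have "T \<subseteq> cl T" using sub_cl[OF T(1)] .
      moreover have "cl T \<subseteq> cl (insert f T)" by (rule cl_mono) blast
      ultimately show ?thesis by blast
    qed
    ultimately have "insert y T \<subseteq> cl (insert f T)" by blast
    then have "cl (insert y T) \<subseteq> cl (insert f T)" by (rule cl_cl_sub)
    then have ef: "e \<in> cl (insert f T)" using y(2) by blast
    have fC12: "f \<in> C1 \<or> f \<in> C2" using f Ceq by blast
    show False
    proof (cases "f \<in> C1")
      case True
      have "good A T C2 \<and> card C2 < card C"
        by (rule shrinkN[OF T(1) gC C1 C2 int Ceq False eA True f(1) ef c1])
      then show False using mn by fastforce
    next
      case False': False
      then have "f \<in> C2" using fC12 by blast
      then have "good A T C1 \<and> card C1 < card C"
        by (rule shrinkN[OF T(1) gC C2 C1 int' Ceq' False eA _ f(1) ef c2])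
      then show False using mn by fastforce
    qed
  qed
qed

end



lemma bit_add_eq0: "(a::bit) + b = 0 \<longleftrightarrow> a = b"
  by (cases a; cases b) auto

lemma bit_3: "(v::bit) + a = 0 \<Longrightarrow> a + b = 0 \<Longrightarrow> v + b = 0"
  by (cases a; cases b; cases v) auto

context mat begin

lemma binary_split:
  assumes bin: "binary_matroid E I" and simple: "simple_matroid E I" and C: "circuit E I C"
    and x: "x \<in> cl C" "x \<notin> C"
  shows "\<exists>C1 C2. circuit E I C1 \<and> circuit E I C2 \<and> C1 \<inter> C2 = {x} \<and> C = (C1 \<union> C2) - {x}"
proof -
  obtain rv :: "'a \<Rightarrow> nat \<Rightarrow> bit" where rv: "\<And>X. X \<subseteq> E \<Longrightarrow>
      (I X \<longleftrightarrow> (\<forall>Y. Y \<subseteq> X \<and> Y \<noteq> {} \<longrightarrow> (\<exists>i. (\<Sum>e\<in>Y. rv e i) \<noteq> 0)))"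
    using bin unfolding binary_matroid_def by blast
  define zs where "zs Y \<longleftrightarrow> (\<forall>i. (\<Sum>e\<in>Y. rv e i) = 0)" for Y
  have indep_nzs: "\<not> zs Y" if "I X" "Y \<subseteq> X" "Y \<noteq> {}" for X Y
    using rv[OF I_sub[OF that(1)]] that unfolding zs_def by blast
  have dep_zs: "\<not> I X" if "X \<subseteq> E" "Y \<subseteq> X" "Y \<noteq> {}" "zs Y" for X Y
    using indep_nzs that by blast
  have circ_zs: "zs D" if D: "circuit E I D" for D
  proof -
    have "\<not> I D" "D \<subseteq> E" using circuitD[OF D] by blast+
    then obtain Y where Y: "Y \<subseteq> D" "Y \<noteq> {}" "\<forall>i. (\<Sum>e\<in>Y. rv e i) = 0"
      using rv[of D] by blast
    have "Y = D"
    proof (rule ccontr)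
      assume "Y \<noteq> D"
      then have "I Y" using circuit_proper[OF D Y(1)] by blast
      then show False using indep_nzs[of Y Y] Y unfolding zs_def by blast
    qed
    then show ?thesis using Y unfolding zs_def by blast
  qed
  have fC: "finite C" and CE: "C \<subseteq> E" using circuitD[OF C] by blast+
  have xE: "x \<in> E" using x(1) cl_sub by blast
  obtain c where c: "c \<in> C" using circuitD(4)[OF C] by blast
  let ?Z = "insert x (C - {c})"
  have "r ?Z \<le> r (insert x C)" by (rule rank_mono) blast
  moreover have "r (insert x C) = r C" using x(1) by (simp add: cl_iff)
  moreover have "card C > 0" using fC c card_gt_0_iff by blast
  then have "card ?Z = card C" using fC c x(2) by (simp add: card_insert_if)
  moreover have "card C \<ge> 1" using circuit_rank(2)[OF C] .
  ultimately have "r ?Z \<noteq> card ?Z" using circuit_rank(1)[OF C] by linarith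
  then have "\<not> I ?Z" using rank_indep by blast
  moreover have "?Z \<subseteq> E" using CE xE by blast
  ultimately obtain C1 where C1s: "C1 \<subseteq> ?Z" and C1: "circuit E I C1" using dep_circuit by blast
  have fC1: "finite C1" using circuitD(2)[OF C1] .
  have xC1: "x \<in> C1"
  proof (rule ccontr)
    assume "x \<notin> C1"
    then have "C1 \<subseteq> C - {c}" using C1s by blast
    then have "I C1" using I_mono circuitD(5)[OF C c] by blast
    then show False using circuitD(3)[OF C1] by blast
  qed
  have "card C1 \<ge> 3" using simple C1 unfolding simple_matroid_def by blast
  have "C1 - {x} \<noteq> {}"
  proof
    assume "C1 - {x} = {}"
    then have "C1 \<subseteq> {x}" by blast
    then have "card C1 \<le> card {x}" by (rule card_mono[rotated]) simp
    then show False using \<open>card C1 \<ge> 3\<close> by simp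
  qed
  then have CC1: "C \<inter> C1 \<noteq> {}" using C1s by blast
  have C1x: "C1 - {x} = C \<inter> C1" using C1s x(2) by blast
  let ?D = "insert x (C - C1)"
  have zsD: "zs ?D" unfolding zs_def
  proof
    fix i
    have a: "(\<Sum>e\<in>C. rv e i) = 0" using circ_zs[OF C] unfolding zs_def by blast
    have b: "(\<Sum>e\<in>C1. rv e i) = 0" using circ_zs[OF C1] unfolding zs_def by blast
    have a': "(\<Sum>e\<in>C. rv e i) = (\<Sum>e\<in>C \<inter> C1. rv e i) + (\<Sum>e\<in>C - C1. rv e i)"
      using fC by (rule sum.Int_Diff)
    have b': "(\<Sum>e\<in>C1. rv e i) = rv x i + (\<Sum>e\<in>C1 - {x}. rv e i)"
      using fC1 xC1 by (rule sum.remove)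
    have d': "(\<Sum>e\<in>?D. rv e i) = rv x i + (\<Sum>e\<in>C - C1. rv e i)"
      using fC x(2) by simp
    show "(\<Sum>e\<in>?D. rv e i) = 0" using bit_3[of "rv x i" "\<Sum>e\<in>C \<inter> C1. rv e i" "\<Sum>e\<in>C - C1. rv e i"]
      a a' b b' d' C1x by simp
  qed
  have DE: "?D \<subseteq> E" using CE xE by blast
  have "\<not> I ?D" by (rule dep_zs[OF DE _ _ zsD]) auto
  then obtain C2 where C2s: "C2 \<subseteq> ?D" and C2: "circuit E I C2" using dep_circuit[OF DE] by blast
  have fC2: "finite C2" using circuitD(2)[OF C2] .
  have xC2: "x \<in> C2"
  proof (rule ccontr)
    assume "x \<notin> C2"
    then have "C2 \<subseteq> C - C1" using C2s by blast
    moreover have "C - C1 \<noteq> C" using CC1 by blast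
    ultimately have "I C2" using circuit_proper[OF C, of C2] by blast
    then show False using circuitD(3)[OF C2] by blast
  qed
  have int: "C1 \<inter> C2 = {x}" using C2s xC1 xC2 by blast
  let ?W = "(C1 \<union> C2) - {x}"
  have WC: "?W \<subseteq> C" using C1s C2s by blast
  have Wne: "?W \<noteq> {}" using \<open>C1 - {x} \<noteq> {}\<close> by blast
  have zsW: "zs ?W" unfolding zs_def
  proof
    fix i
    have b: "(\<Sum>e\<in>C1. rv e i) = 0" using circ_zs[OF C1] unfolding zs_def by blast
    have b': "(\<Sum>e\<in>C1. rv e i) = rv x i + (\<Sum>e\<in>C1 - {x}. rv e i)"
      using fC1 xC1 by (rule sum.remove)
    have c: "(\<Sum>e\<in>C2. rv e i) = 0" using circ_zs[OF C2] unfolding zs_def by blast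
    have c': "(\<Sum>e\<in>C2. rv e i) = rv x i + (\<Sum>e\<in>C2 - {x}. rv e i)"
      using fC2 xC2 by (rule sum.remove)
    have "?W = (C1 - {x}) \<union> (C2 - {x})" by blast
    moreover have "(C1 - {x}) \<inter> (C2 - {x}) = {}" using int by blast
    ultimately have w: "(\<Sum>e\<in>?W. rv e i) = (\<Sum>e\<in>C1 - {x}. rv e i) + (\<Sum>e\<in>C2 - {x}. rv e i)"
      using fC1 fC2 by (simp add: sum.union_disjoint)
    have "rv x i + (\<Sum>e\<in>C1 - {x}. rv e i) = 0" using b b' by simp
    moreover have "rv x i + (\<Sum>e\<in>C2 - {x}. rv e i) = 0" using c c' by simp
    ultimately show "(\<Sum>e\<in>?W. rv e i) = 0" using w bit_add_eq0 by metis
  qed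
  have "?W = C"
  proof (rule ccontr)
    assume "?W \<noteq> C"
    then have "I ?W" using circuit_proper[OF C WC] by blast
    then show False using indep_nzs[of ?W ?W] Wne zsW by blast
  qed
  then show ?thesis using C1 C2 int by blast
qed

end


context mat begin

lemma ins_sub_cl:
  assumes T: "T \<subseteq> E" and w: "w \<in> cl (insert z T)"
  shows "cl (insert w T) \<subseteq> cl (insert z T)"
proof -
  have "T \<subseteq> cl T" using sub_cl[OF T] .
  moreover have "cl T \<subseteq> cl (insert z T)" by (rule cl_mono) blast
  ultimately have "insert w T \<subseteq> cl (insert z T)" using w by blast
  then show ?thesis by (rule cl_cl_sub)
qed

lemma self_cl: "T \<subseteq> E \<Longrightarrow> z \<in> E \<Longrightarrow> z \<in> cl (insert z T)"
  using sub_cl[of "insert z T"] by blast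

lemma par_eq:
  assumes T: "T \<subseteq> E" and z: "z \<in> E" and wK: "w \<notin> cl T" and w: "w \<in> cl (insert z T)"
  shows "cl (insert w T) = cl (insert z T)"
proof
  show "cl (insert w T) \<subseteq> cl (insert z T)" by (rule ins_sub_cl[OF T w])
  have "z \<in> cl (insert w T)" by (rule exchange[OF w wK z])
  then show "cl (insert z T) \<subseteq> cl (insert w T)" by (rule ins_sub_cl[OF T])
qed

lemma dir2_core:
  assumes bin: "binary_matroid E I" and simple: "simple_matroid E I" and nch: "\<not> chordal E I"
  shows "\<exists>A J. induced_minor E I A J \<and> is_U34 A J"
proof -
  obtain C where C: "circuit E I C" and C4: "card C \<ge> 4"
    and nos: "\<not> (\<exists>C1 C2 e. circuit E I C1 \<and> circuit E I C2 \<and> C1 \<inter> C2 = {e} \<and> C = (C1 \<union> C2) - {e})"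
    using nch unfolding chordal_def by blast
  have flatC: "x \<in> C" if "x \<in> cl C" for x
    using binary_split[OF bin simple C that] nos by blast
  have fC: "finite C" and CE: "C \<subseteq> E" using circuitD[OF C] by blast+
  obtain F where FC: "F \<subseteq> C" and F4: "card F = 4" and fF: "finite F"
    using obtain_subset_with_card_n[OF C4] by blast
  define T where "T = C - F"
  have TE: "T \<subseteq> E" using CE unfolding T_def by blast
  have FT: "F \<inter> T = {}" unfolding T_def by blast
  have FE: "F \<subseteq> E" using FC CE by blast
  have FTC: "F \<union> T = C" using FC unfolding T_def by blast
  have fT: "finite T" using fC unfolding T_def by blast
  have Fne: "F \<noteq> {}" using F4 by auto
  have "T \<noteq> C" using Fne FC unfolding T_def by blast
  then have IT: "I T" using circuit_proper[OF C] unfolding T_def by blast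
  have rT: "r T = card T" by (rule rank_indep[OF IT])
  have indF: "r (X \<union> T) = card X + r T \<longleftrightarrow> card X \<le> 3" if X: "X \<subseteq> F" for X
  proof (cases "X = F")
    case True
    have "card C = card F + card T" using FTC fF fT FT card_Un_disjoint by metis
    moreover have "r C = card C - 1" by (rule circuit_rank(1)[OF C])
    ultimately show ?thesis using True FTC F4 rT by simp
  next
    case False
    have fX: "finite X" using finite_subset[OF X fF] .
    have "X \<subset> F" using X False by blast
    then have "card X < card F" using psubset_card_mono[OF fF] by blast
    then have c3: "card X \<le> 3" using F4 by simp
    obtain f where f: "f \<in> F" "f \<notin> X" using X False by blast
    have "X \<union> T \<subseteq> C" using X FTC by blast
    moreover have "f \<in> C" "f \<notin> X \<union> T" using f FT FC by blast+
    ultimately have "I (X \<union> T)" using circuit_proper[OF C, of "X \<union> T"] by blast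
    then have "r (X \<union> T) = card (X \<union> T)" by (rule rank_indep)
    moreover have "card (X \<union> T) = card X + card T" using fX fT X FT by (intro card_Un_disjoint) auto
    ultimately show ?thesis using c3 rT by simp
  qed
  let ?A0 = "E - T"
  have A0E: "?A0 \<subseteq> E" by blast
  have A0T: "?A0 \<inter> T = {}" by blast
  have J0: "contr_indep E I T = Jc ?A0 T"
    by (auto simp: contr_indep_def Jc_def fun_eq_iff)
  define nl where "nl z \<longleftrightarrow> z \<in> ?A0 \<and> z \<notin> cl T" for z
  have Fnl: "nl f" if f: "f \<in> F" for f
  proof -
    have "r ({f} \<union> T) = card {f} + r T" using indF[of "{f}"] f by simp
    then have "r (insert f T) = Suc (r T)" by simp
    then have "f \<notin> cl T" by (simp add: cl_iff)
    then show ?thesis unfolding nl_def using f FE FT by blast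
  qed
  have Fpar: "g = f" if fg: "f \<in> F" "g \<in> F" "g \<in> cl (insert f T)" for f g
  proof (rule ccontr)
    assume ne: "g \<noteq> f"
    have "r ({f, g} \<union> T) = card {f, g} + r T" using indF[of "{f, g}"] fg ne by simp
    moreover have "{f, g} \<union> T = insert g (insert f T)" by blast
    ultimately have a: "r (insert g (insert f T)) = Suc (Suc (r T))" using ne by simp
    have b: "r (insert g (insert f T)) = r (insert f T)" using fg(3) by (simp add: cl_iff)
    have c: "r (insert f T) \<le> Suc (r T)" by (rule rank_insert)
    show False using a b c by simp
  qed
  define Cls where "Cls z = {w. nl w \<and> w \<in> cl (insert z T)}" for z
  define rep where "rep z = (SOME w. w \<in> Cls z)" for z
  have rep_in: "nl (rep z) \<and> rep z \<in> cl (insert z T)" if z: "nl z" for z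
  proof -
    have "z \<in> E" using z unfolding nl_def by blast
    then have "z \<in> Cls z" using z self_cl[OF TE] unfolding Cls_def by blast
    then have "rep z \<in> Cls z" unfolding rep_def by (rule someI)
    then show ?thesis unfolding Cls_def by blast
  qed
  have parsym: "cl (insert w T) = cl (insert z T)" if "nl z" "nl w" "w \<in> cl (insert z T)" for z w
    using par_eq[OF TE _ _ that(3)] that unfolding nl_def by blast
  have rep_eq: "rep w = rep z" if "nl z" "nl w" "w \<in> cl (insert z T)" for z w
  proof -
    have "Cls w = Cls z" unfolding Cls_def using parsym[OF that] by simp
    then show ?thesis unfolding rep_def by simp
  qed
  define Q where "Q z \<longleftrightarrow> nl z \<and> (\<forall>f\<in>F. f \<notin> cl (insert z T))" for z
  define S where "S = F \<union> rep ` {z. Q z}"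
  have Snl: "nl s" if "s \<in> S" for s
    using that Fnl rep_in unfolding S_def Q_def by blast
  have SA: "S \<subseteq> ?A0" using Snl unfolding nl_def by blast
  have FS: "F \<subseteq> S" unfolding S_def by blast
  have rank1: "rank (Jc ?A0 T) {e, s} = 1 \<longleftrightarrow> s \<in> cl (insert e T)"
    if e: "nl e" and s: "s \<in> ?A0" for e s
  proof -
    have eA: "e \<in> ?A0" using e unfolding nl_def by blast
    have "{e, s} \<inter> ?A0 = {e, s}" using eA s by blast
    then have "rank (Jc ?A0 T) {e, s} = r ({e, s} \<union> T) - r T"
      using rank_Jc[OF A0E TE A0T, of "{e, s}"] by simp
    moreover have "{e, s} \<union> T = insert s (insert e T)" by blast
    moreover have "r (insert e T) = Suc (r T)" using notin_cl[of e T] e unfolding nl_def by blast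
    moreover have "r (insert s (insert e T)) = r (insert e T) \<or>
        r (insert s (insert e T)) = Suc (r (insert e T))" by (rule rank_insert_cases)
    moreover have "s \<in> E" using s by blast
    ultimately show ?thesis by (auto simp: cl_iff)
  qed
  have uniq: "\<exists>!s. s \<in> S \<and> s \<in> cl (insert e T)" if e: "nl e" for e
  proof (cases "\<exists>f\<in>F. f \<in> cl (insert e T)")
    case True
    then obtain f where f: "f \<in> F" "f \<in> cl (insert e T)" by blast
    have clf: "cl (insert f T) = cl (insert e T)" by (rule parsym[OF e Fnl[OF f(1)] f(2)])
    show ?thesis
    proof (rule ex1I[of _ f])
      show "f \<in> S \<and> f \<in> cl (insert e T)" using f FS by blast
    next
      fix s assume s: "s \<in> S \<and> s \<in> cl (insert e T)"
      have cls: "cl (insert s T) = cl (insert e T)" by (rule parsym[OF e Snl]) (use s in blast)+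
      show "s = f"
      proof (cases "s \<in> F")
        case True
        then show ?thesis using Fpar[OF f(1) True] s clf by blast
      next
        case False
        then obtain z where z: "Q z" "s = rep z" using s unfolding S_def by blast
        have nz: "nl z" using z(1) unfolding Q_def by blast
        have "cl (insert s T) = cl (insert z T)" using parsym[OF nz] rep_in[OF nz] z(2) by blast
        then have "f \<in> cl (insert z T)" using f(2) cls by simp
        then show ?thesis using z(1) f(1) unfolding Q_def by blast
      qed
    qed
  next
    case False
    then have Qe: "Q e" using e unfolding Q_def by blast
    show ?thesis
    proof (rule ex1I[of _ "rep e"])
      show "rep e \<in> S \<and> rep e \<in> cl (insert e T)" using Qe rep_in[OF e] unfolding S_def by blast
    next
      fix s assume s: "s \<in> S \<and> s \<in> cl (insert e T)"
      have cls: "cl (insert s T) = cl (insert e T)" by (rule parsym[OF e Snl]) (use s in blast)+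
      have "s \<notin> F" using s False by blast
      then obtain z where z: "Q z" "s = rep z" using s unfolding S_def by blast
      have nz: "nl z" using z(1) unfolding Q_def by blast
      have "cl (insert s T) = cl (insert z T)" using parsym[OF nz] rep_in[OF nz] z(2) by blast
      then have "cl (insert z T) = cl (insert e T)" using cls by simp
      moreover have "z \<in> cl (insert z T)" using self_cl[OF TE] nz unfolding nl_def by blast
      ultimately have "z \<in> cl (insert e T)" by simp
      then have "rep z = rep e" by (rule rep_eq[OF e nz])
      then show "s = rep e" using z(2) by simp
    qed
  qed
  have ss0: "simplification_set ?A0 (Jc ?A0 T) S"
    unfolding simplification_set_def
  proof (intro conjI ballI impI)
    show "S \<subseteq> ?A0" by (rule SA)
  next
    fix s assume "s \<in> S"
    then have "nl s" by (rule Snl)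
    then show "\<not> loop ?A0 (Jc ?A0 T) s" using loop_Jc[OF _ A0E] unfolding nl_def by blast
  next
    fix e assume eA: "e \<in> ?A0" and nlp: "\<not> loop ?A0 (Jc ?A0 T) e"
    have ne: "nl e" using loop_Jc[OF eA A0E] nlp eA unfolding nl_def by blast
    have eqv: "(s \<in> S \<and> rank (Jc ?A0 T) {e, s} = 1) \<longleftrightarrow> (s \<in> S \<and> s \<in> cl (insert e T))" for s
      using rank1[OF ne] SA by blast
    show "\<exists>!s. s \<in> S \<and> rank (Jc ?A0 T) {e, s} = 1" unfolding eqv by (rule uniq[OF ne])
  qed
  have ss: "simplification_set (E - T) (contr_indep E I T) S" using ss0 J0 by simp
  have m1: "induced_minor E I S (restr_indep (contr_indep E I T) S)"
    by (rule induced_minor.contract_simplify[OF induced_minor.refl TE ss])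
  have N1: "restr_indep (contr_indep E I T) S = Jc S T" using J0 restr_Jc[OF SA] by simp
  have SE: "S \<subseteq> E" using SA by blast
  have ST: "S \<inter> T = {}" using SA by blast
  have clos: "closure S (Jc S T) F = F"
  proof
    show "closure S (Jc S T) F \<subseteq> F"
    proof
      fix x assume x: "x \<in> closure S (Jc S T) F"
      then have xS: "x \<in> S" unfolding closure_def by blast
      then have "x \<in> cl (F \<union> T)" using closure_Jc[OF SE TE ST FS xS] x by blast
      then have "x \<in> C" using flatC FTC by simp
      then show "x \<in> F" using xS ST FTC by blast
    qed
  next
    show "F \<subseteq> closure S (Jc S T) F"
    proof
      fix x assume x: "x \<in> F"
      have "C \<subseteq> cl C" by (rule sub_cl[OF CE])
      then have "x \<in> cl (F \<union> T)" using x FTC by blast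
      then show "x \<in> closure S (Jc S T) F" using closure_Jc[OF SE TE ST FS] x FS by blast
    qed
  qed
  have flatF: "flat S (restr_indep (contr_indep E I T) S) F"
    unfolding N1 flat_def using FS clos by blast
  have m2: "induced_minor E I F (restr_indep (restr_indep (contr_indep E I T) S) F)"
    by (rule induced_minor.restrict_flat[OF m1 flatF])
  have N2: "restr_indep (restr_indep (contr_indep E I T) S) F = Jc F T"
    using N1 restr_Jc[OF FS] by simp
  have "is_U34 F (Jc F T)"
    unfolding is_U34_def
  proof (intro conjI allI)
    show "card F = 4" by (rule F4)
    fix X
    show "Jc F T X \<longleftrightarrow> X \<subseteq> F \<and> card X \<le> 3"
      using indF unfolding Jc_def by blast
  qed
  then show ?thesis using m2 N2 by metis
qed

end

theorem lemma3p8: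
  fixes E :: "'a set" and I :: "'a set \<Rightarrow> bool"
  assumes "matroid E I" and "simple_matroid E I" and "binary_matroid E I"
  shows "chordal E I \<longleftrightarrow> \<not> (\<exists>E' I'. induced_minor E I E' I' \<and> is_U34 E' I')"
proof -
  interpret mat E I using assms(1) by (rule mat.intro)
  show ?thesis
  proof
    assume ch: "chordal E I"
    show "\<not> (\<exists>E' I'. induced_minor E I E' I' \<and> is_U34 E' I')"
    proof
      assume "\<exists>E' I'. induced_minor E I E' I' \<and> is_U34 E' I'"
      then obtain E' I' where m: "induced_minor E I E' I'" and u: "is_U34 E' I'" by blast
      show False by (rule dir1_core[OF assms(2) ch Inv_minor[OF m] u])
    qed
  next
    assume n: "\<not> (\<exists>E' I'. induced_minor E I E' I' \<and> is_U34 E' I')"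
    show "chordal E I"
    proof (rule ccontr)
      assume "\<not> chordal E I"
      then show False using dir2_core[OF assms(3) assms(2)] n by blast
    qed
  qed
qed

end
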